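(* Let $\mathcal E$ be a relation on closed values and $t_0,t_1$ closed terms with $t_0\approx^p_{\mathcal E}t_1$. Then for every closed evaluation context $F$, $F[t_0]\approx^p_{\mathcal E}F[t_1]$.
   Context: Terms of $\lambda_S$: $t ::= x \mid \lambda x.t \mid t\,t \mid \mathcal{S}k.t \mid \langle t\rangle$ (shift binds $k$; $\langle\cdot\rangle$ reset), up to $\alpha$-conversion. Values $v::=\lambda x.t$. Pure contexts $E ::= \Box \mid v\,E \mid E\,t$; evaluation contexts $F ::= \Box \mid v\,F \mid F\,t \mid \langle F\rangle$. Reduction: $F[(\lambda x.t)v]\to F[t\{v/x\}]$; $F[\langle E[\mathcal Sk.t]\rangle]\to F[\langle t\{\lambda x.\langle E[x]\rangle/k\}\rangle]$ ($x\notin\mathrm{fv}(E)$); $F[\langle v\rangle]\to F[v]$; $\to^*$ reflexive-transitive closure. Program: term $\langle t\rangle$ (ranged over by $p$). Closures: for $R$ a relation on closed terms, $\widetilde R$ is the smallest relation containing $R$, all $(x,x)$, closed under all term constructors, restricted to closed terms; $\widehat R$ is the smallest relation on closed evaluation contexts with $\Box\widehat R\Box$, $v_0F_0\widehat Rv_1F_1$ if $F_0\widehat RF_1,v_0\widetilde Rv_1$; $F_0t_0\widehat RF_1t_1$ if $F_0\widehat RF_1,t_0\widetilde Rt_1$; $\langle F_0\rangle\widehat R\langle F_1\rangle$ if $F_0\widehat RF_1$. Environmental bisimilarity for programs: an environment $\mathcal E$ is a relation on closed values; an environmental relation $\mathcal X$ is a set of environments and triples $(\mathcal E,t_0,t_1)$,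 $t_0,t_1$ closed, written $t_0\mathcal X_{\mathcal E}t_1$. $\mathcal X$ is an environmental bisimulation for programs if (1) if $t_0\mathcal X_{\mathcal E}t_1$ and $t_0,t_1$ are not both programs, then for all pure $E_0\widehat{\mathcal E}E_1$, $\langle E_0[t_0]\rangle\mathcal X_{\mathcal E}\langle E_1[t_1]\rangle$; (2) if $p_0\mathcal X_{\mathcal E}p_1$: (a) $p_0\to p_0'$ (program) implies $p_1\to^*p_1'$ (program) with $p_0'\mathcal X_{\mathcal E}p_1'$; (b) $p_0\to v_0$ implies $p_1\to^*v_1$ and $\{(v_0,v_1)\}\cup\mathcal E\in\mathcal X$; (c) symmetric conditions; (3) for $\mathcal E\in\mathcal X$, $(\lambda x.t_0)\mathcal E(\lambda x.t_1)$ and $v_0\widetilde{\mathcal E}v_1$ imply $t_0\{v_0/x\}\mathcal X_{\mathcal E}t_1\{v_1/x\}$. $\approx^p$ is the largest such relation; $t_0\approx^p_{\mathcal E}t_1$ means $(\mathcal E,t_0,t_1)\in\approx^p$. *)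

theory Defs
  imports Main
begin

section \<open>Terms of lambda_S (locally nameless: de Bruijn indices, so alpha-equivalence is equality)\<close>

datatype tm = Var nat | Lam tm | App tm tm | Shift tm | Reset tm
  (* Shift t: the shift operator binds index 0 (the continuation variable k) in t *)

fun is_val :: "tm \<Rightarrow> bool" where
  "is_val (Lam _) = True"
| "is_val _ = False"

fun closed_at :: "nat \<Rightarrow> tm \<Rightarrow> bool" where
  "closed_at n (Var i) = (i < n)"
| "closed_at n (Lam t) = closed_at (Suc n) t"
| "closed_at n (App s t) = (closed_at n s \<and> closed_at n t)"
| "closed_at n (Shift t) = closed_at (Suc n) t"
| "closed_at n (Reset t) = closed_at n t"

definition closed :: "tm \<Rightarrow> bool" where
  "closed t = closed_at 0 t"

fun lift :: "nat \<Rightarrow> tm \<Rightarrow> tm" where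
  "lift k (Var i) = (if i < k then Var i else Var (Suc i))"
| "lift k (Lam t) = Lam (lift (Suc k) t)"
| "lift k (App s t) = App (lift k s) (lift k t)"
| "lift k (Shift t) = Shift (lift (Suc k) t)"
| "lift k (Reset t) = Reset (lift k t)"

fun subst :: "nat \<Rightarrow> tm \<Rightarrow> tm \<Rightarrow> tm" where
  "subst k s (Var i) = (if i < k then Var i else if i = k then s else Var (i - 1))"
| "subst k s (Lam t) = Lam (subst (Suc k) (lift 0 s) t)"
| "subst k s (App t u) = App (subst k s t) (subst k s u)"
| "subst k s (Shift t) = Shift (subst (Suc k) (lift 0 s) t)"
| "subst k s (Reset t) = Reset (subst k s t)"

(* CAppL F t = F t ;  CAppR v F = v F ;  CReset F = <F> *)
datatype ctx = Hole | CAppL ctx tm | CAppR tm ctx | CReset ctx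

fun plug :: "ctx \<Rightarrow> tm \<Rightarrow> tm" where
  "plug Hole t = t"
| "plug (CAppL F u) t = App (plug F t) u"
| "plug (CAppR v F) t = App v (plug F t)"
| "plug (CReset F) t = Reset (plug F t)"

fun ectx :: "ctx \<Rightarrow> bool" where
  "ectx Hole = True"
| "ectx (CAppL F u) = ectx F"
| "ectx (CAppR v F) = (is_val v \<and> ectx F)"
| "ectx (CReset F) = ectx F"

fun pctx :: "ctx \<Rightarrow> bool" where
  "pctx Hole = True"
| "pctx (CAppL F u) = pctx F"
| "pctx (CAppR v F) = (is_val v \<and> pctx F)"
| "pctx (CReset F) = False"

fun liftc :: "nat \<Rightarrow> ctx \<Rightarrow> ctx" where
  "liftc k Hole = Hole"
| "liftc k (CAppL F u) = CAppL (liftc k F) (lift k u)"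
| "liftc k (CAppR v F) = CAppR (lift k v) (liftc k F)"
| "liftc k (CReset F) = CReset (liftc k F)"

fun closed_ctx :: "ctx \<Rightarrow> bool" where
  "closed_ctx Hole = True"
| "closed_ctx (CAppL F u) = (closed_ctx F \<and> closed u)"
| "closed_ctx (CAppR v F) = (closed v \<and> closed_ctx F)"
| "closed_ctx (CReset F) = closed_ctx F"

inductive step :: "tm \<Rightarrow> tm \<Rightarrow> bool" where
  beta: "\<lbrakk>ectx F; is_val v\<rbrakk> \<Longrightarrow> step (plug F (App (Lam t) v)) (plug F (subst 0 v t))"
| shift: "\<lbrakk>ectx F; pctx E\<rbrakk> \<Longrightarrow>
     step (plug F (Reset (plug E (Shift t))))
          (plug F (Reset (subst 0 (Lam (Reset (plug (liftc 0 E) (Var 0)))) t)))"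
| reset: "\<lbrakk>ectx F; is_val v\<rbrakk> \<Longrightarrow> step (plug F (Reset v)) (plug F v)"

definition steps :: "tm \<Rightarrow> tm \<Rightarrow> bool" where
  "steps = step\<^sup>*\<^sup>*"

fun is_prog :: "tm \<Rightarrow> bool" where
  "is_prog (Reset _) = True"
| "is_prog _ = False"

inductive tilde_aux :: "(tm \<times> tm) set \<Rightarrow> tm \<Rightarrow> tm \<Rightarrow> bool" for R where
  base: "(s, t) \<in> R \<Longrightarrow> tilde_aux R s t"
| var: "tilde_aux R (Var i) (Var i)"
| lam: "tilde_aux R s t \<Longrightarrow> tilde_aux R (Lam s) (Lam t)"
| app: "\<lbrakk>tilde_aux R s1 t1; tilde_aux R s2 t2\<rbrakk> \<Longrightarrow> tilde_aux R (App s1 s2) (App t1 t2)"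
| shft: "tilde_aux R s t \<Longrightarrow> tilde_aux R (Shift s) (Shift t)"
| rst: "tilde_aux R s t \<Longrightarrow> tilde_aux R (Reset s) (Reset t)"

definition tilde :: "(tm \<times> tm) set \<Rightarrow> (tm \<times> tm) set" where
  "tilde R = {(s, t). tilde_aux R s t \<and> closed s \<and> closed t}"

inductive hat :: "(tm \<times> tm) set \<Rightarrow> ctx \<Rightarrow> ctx \<Rightarrow> bool" for R where
  hole: "hat R Hole Hole"
| appr: "\<lbrakk>hat R F0 F1; (v0, v1) \<in> tilde R; is_val v0; is_val v1\<rbrakk>
          \<Longrightarrow> hat R (CAppR v0 F0) (CAppR v1 F1)"
| appl: "\<lbrakk>hat R F0 F1; (t0, t1) \<in> tilde R\<rbrakk> \<Longrightarrow> hat R (CAppL F0 t0) (CAppL F1 t1)"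
| rst: "hat R F0 F1 \<Longrightarrow> hat R (CReset F0) (CReset F1)"

type_synonym env = "(tm \<times> tm) set"
(* an environmental relation: its set of environments, and its set of triples (E, t0, t1) *)
type_synonym envrel = "env set \<times> (env \<times> tm \<times> tm) set"

definition is_env :: "env \<Rightarrow> bool" where
  "is_env E \<longleftrightarrow> (\<forall>(v0, v1) \<in> E. closed v0 \<and> closed v1 \<and> is_val v0 \<and> is_val v1)"

definition envrel_wf :: "envrel \<Rightarrow> bool" where
  "envrel_wf X \<longleftrightarrow> (\<forall>E \<in> fst X. is_env E) \<and>
     (\<forall>(E, t0, t1) \<in> snd X. is_env E \<and> closed t0 \<and> closed t1)"

definition prog_bisim :: "envrel \<Rightarrow> bool" where
  "prog_bisim X \<longleftrightarrow> envrel_wf X \<and>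
    \<comment> \<open>(1)\<close>
    (\<forall>E t0 t1. (E, t0, t1) \<in> snd X \<and> \<not> (is_prog t0 \<and> is_prog t1) \<longrightarrow>
       (\<forall>E0 E1. pctx E0 \<and> pctx E1 \<and> hat E E0 E1 \<longrightarrow>
          (E, Reset (plug E0 t0), Reset (plug E1 t1)) \<in> snd X)) \<and>
    \<comment> \<open>(2a),(2b)\<close>
    (\<forall>E p0 p1. (E, p0, p1) \<in> snd X \<and> is_prog p0 \<and> is_prog p1 \<longrightarrow>
       (\<forall>p0'. step p0 p0' \<and> is_prog p0' \<longrightarrow>
          (\<exists>p1'. steps p1 p1' \<and> is_prog p1' \<and> (E, p0', p1') \<in> snd X)) \<and>
       (\<forall>v0. step p0 v0 \<and> is_val v0 \<longrightarrow>
          (\<exists>v1. steps p1 v1 \<and> is_val v1 \<and> {(v0, v1)} \<union> E \<in> fst X))) \<and>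
    \<comment> \<open>(2c) symmetric conditions\<close>
    (\<forall>E p0 p1. (E, p0, p1) \<in> snd X \<and> is_prog p0 \<and> is_prog p1 \<longrightarrow>
       (\<forall>p1'. step p1 p1' \<and> is_prog p1' \<longrightarrow>
          (\<exists>p0'. steps p0 p0' \<and> is_prog p0' \<and> (E, p0', p1') \<in> snd X)) \<and>
       (\<forall>v1. step p1 v1 \<and> is_val v1 \<longrightarrow>
          (\<exists>v0. steps p0 v0 \<and> is_val v0 \<and> {(v0, v1)} \<union> E \<in> fst X))) \<and>
    \<comment> \<open>(3)\<close>
    (\<forall>E \<in> fst X. \<forall>t0 t1 v0 v1. (Lam t0, Lam t1) \<in> E \<and> (v0, v1) \<in> tilde E
         \<and> is_val v0 \<and> is_val v1 \<longrightarrow>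
       (E, subst 0 v0 t0, subst 0 v1 t1) \<in> snd X)"

(* t0 \<approx>^p_E t1 : the triple belongs to the largest environmental bisimulation for programs
   (= the union of all of them) *)
definition bisimp :: "env \<Rightarrow> tm \<Rightarrow> tm \<Rightarrow> bool" where
  "bisimp E t0 t1 \<longleftrightarrow> (\<exists>X. prog_bisim X \<and> (E, t0, t1) \<in> snd X)"

end

theory Submission imports Defs begin



lemma closed_at_mono: "closed_at n t \<Longrightarrow> n \<le> m \<Longrightarrow> closed_at m t"
  by (induction t arbitrary: n m) auto

lemma lift_closed: "closed_at k t \<Longrightarrow> lift k t = t"
  by (induction t arbitrary: k) auto

lemma subst_closed: "closed_at k t \<Longrightarrow> subst k s t = t"
  by (induction t arbitrary: k s) auto

lemma closed_lift: "closed_at n t \<Longrightarrow> closed_at (Suc n) (lift k t)"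
  by (induction t arbitrary: n k) auto

lemma closed_subst: "closed_at (Suc n) t \<Longrightarrow> closed_at n s \<Longrightarrow> k \<le> n \<Longrightarrow> closed_at n (subst k s t)"
  by (induction t arbitrary: n k s) (auto simp: closed_lift)

fun cca :: "nat \<Rightarrow> ctx \<Rightarrow> bool" where
  "cca n Hole = True"
| "cca n (CAppL F u) = (cca n F \<and> closed_at n u)"
| "cca n (CAppR v F) = (closed_at n v \<and> cca n F)"
| "cca n (CReset F) = cca n F"

lemma closed_plug: "closed_at n (plug F t) \<longleftrightarrow> cca n F \<and> closed_at n t"
  by (induction F) auto

lemma cca0: "cca 0 F \<longleftrightarrow> closed_ctx F"
  by (induction F) (auto simp: closed_def)

lemma cca_liftc: "cca n F \<Longrightarrow> cca (Suc n) (liftc k F)"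
  by (induction F) (auto simp: closed_lift)

fun ccomp :: "ctx \<Rightarrow> ctx \<Rightarrow> ctx" where
  "ccomp Hole G = G"
| "ccomp (CAppL F u) G = CAppL (ccomp F G) u"
| "ccomp (CAppR v F) G = CAppR v (ccomp F G)"
| "ccomp (CReset F) G = CReset (ccomp F G)"

lemma plug_ccomp[simp]: "plug (ccomp F G) t = plug F (plug G t)"
  by (induction F) auto

lemma ectx_ccomp: "ectx F \<Longrightarrow> ectx G \<Longrightarrow> ectx (ccomp F G)"
  by (induction F) auto

lemma pctx_ccomp: "pctx F \<Longrightarrow> pctx G \<Longrightarrow> pctx (ccomp F G)"
  by (induction F) auto

lemma pctx_ectx: "pctx F \<Longrightarrow> ectx F"
  by (induction F) auto

lemma step_ctx: "step a b \<Longrightarrow> ectx G \<Longrightarrow> step (plug G a) (plug G b)"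
proof (induction rule: step.induct)
  case (beta F v t) then show ?case
    using step.beta[of "ccomp G F" v t] by (simp add: ectx_ccomp)
next
  case (shift F E t) then show ?case
    using step.shift[of "ccomp G F" E t] by (simp add: ectx_ccomp)
next
  case (reset F v) then show ?case
    using step.reset[of "ccomp G F" v] by (simp add: ectx_ccomp)
qed

lemma steps_ctx: "steps a b \<Longrightarrow> ectx G \<Longrightarrow> steps (plug G a) (plug G b)"
  unfolding steps_def
  by (induction rule: rtranclp_induct) (auto intro: rtranclp.rtrancl_into_rtrancl step_ctx)

lemma is_val_plug: "is_val (plug F t) \<Longrightarrow> F = Hole"
  by (cases F) auto

lemma is_val_plug2: "is_val (plug F t) \<Longrightarrow> F = Hole \<and> is_val t"
  by (cases F) auto

inductive contr :: "tm \<Rightarrow> tm \<Rightarrow> bool" where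
  "is_val v \<Longrightarrow> contr (App (Lam t) v) (subst 0 v t)"
| "pctx E \<Longrightarrow> contr (Reset (plug E (Shift t))) (Reset (subst 0 (Lam (Reset (plug (liftc 0 E) (Var 0)))) t))"
| "is_val v \<Longrightarrow> contr (Reset v) v"

lemma step_iff: "step a b \<longleftrightarrow> (\<exists>F x y. ectx F \<and> contr x y \<and> a = plug F x \<and> b = plug F y)"
  by (auto elim!: step.cases contr.cases intro: step.intros contr.intros)

lemma contr_not_val: "contr x y \<Longrightarrow> \<not> is_val x"
  by (auto elim: contr.cases)

lemma step_AppL: "step (App a u) r \<Longrightarrow> \<not> is_val a \<Longrightarrow> \<exists>a'. step a a' \<and> r = App a' u"
proof -
  assume st: "step (App a u) r" and nv: "\<not> is_val a"
  from st obtain F x y where F: "ectx F" "contr x y" "App a u = plug F x" "r = plug F y"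
    unfolding step_iff by blast
  show ?thesis
  proof (cases F)
    case Hole
    with F nv show ?thesis by (auto elim: contr.cases)
  next
    case (CAppL F' u')
    with F show ?thesis unfolding step_iff by auto
  next
    case (CAppR w F')
    with F nv show ?thesis by auto
  next
    case (CReset F')
    with F show ?thesis by auto
  qed
qed

lemma step_AppR: "step (App v a) r \<Longrightarrow> is_val v \<Longrightarrow> \<not> is_val a \<Longrightarrow> \<exists>a'. step a a' \<and> r = App v a'"
proof -
  assume st: "step (App v a) r" and vv: "is_val v" and nv: "\<not> is_val a"
  from st obtain F x y where F: "ectx F" "contr x y" "App v a = plug F x" "r = plug F y"
    unfolding step_iff by blast
  show ?thesis
  proof (cases F)
    case Hole
    with F nv show ?thesis by (auto elim: contr.cases)
  next
    case (CAppL F' u')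
    with F vv show ?thesis using is_val_plug2[of F' x] contr_not_val by auto
  next
    case (CAppR w F')
    with F show ?thesis unfolding step_iff by auto
  next
    case (CReset F')
    with F show ?thesis by auto
  qed
qed

lemma step_Reset: "step (Reset a) r \<Longrightarrow> \<not> is_val a \<Longrightarrow> (\<forall>E t. pctx E \<longrightarrow> a \<noteq> plug E (Shift t))
   \<Longrightarrow> \<exists>a'. step a a' \<and> r = Reset a'"
proof -
  assume st: "step (Reset a) r" and nv: "\<not> is_val a" and ns: "\<forall>E t. pctx E \<longrightarrow> a \<noteq> plug E (Shift t)"
  from st obtain F x y where F: "ectx F" "contr x y" "Reset a = plug F x" "r = plug F y"
    unfolding step_iff by blast
  show ?thesis
  proof (cases F)
    case Hole
    with F have "contr (Reset a) y" by simp
    then show ?thesis using nv ns by cases auto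
  next
    case (CReset F')
    with F show ?thesis unfolding step_iff by auto
  qed (use F in auto)
qed

lemma plug_reset_not_val: "\<not> is_val (plug G (Reset a))"
  by (cases G) auto

lemma plug_shift_not_val: "\<not> is_val (plug G (Shift a))"
  by (cases G) auto

lemma no_shift: "pctx E \<Longrightarrow> ectx G \<Longrightarrow> plug G (Reset a) \<noteq> plug E (Shift t)"
proof (induction E arbitrary: G)
  case Hole then show ?case by (cases G) auto
next
  case (CAppL E u) then show ?case
    by (cases G) (auto simp: plug_shift_not_val)
next
  case (CAppR v E) then show ?case
    by (cases G) (auto simp: plug_reset_not_val)
next
  case (CReset E) then show ?case by simp
qed

lemma decomp_reset: "ectx G \<Longrightarrow> step (plug G (Reset a)) r \<Longrightarrow> \<exists>s. step (Reset a) s \<and> r = plug G s"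
proof (induction G arbitrary: r)
  case Hole then show ?case by auto
next
  case (CAppL G u)
  then obtain a' where "step (plug G (Reset a)) a'" "r = App a' u"
    using step_AppL[of "plug G (Reset a)" u r] plug_reset_not_val by auto
  with CAppL show ?case by fastforce
next
  case (CAppR v G)
  then obtain a' where "step (plug G (Reset a)) a'" "r = App v a'"
    using step_AppR[of v "plug G (Reset a)" r] plug_reset_not_val by auto
  with CAppR show ?case by fastforce
next
  case (CReset G)
  then obtain a' where "step (plug G (Reset a)) a'" "r = Reset a'"
    using step_Reset[of "plug G (Reset a)" r] plug_reset_not_val no_shift by fastforce
  with CReset show ?case by fastforce
qed

lemma step_prog: "step (Reset a) r \<Longrightarrow> is_prog r \<or> is_val r"
  unfolding step_iff
  apply clarify
  subgoal for F x y by (cases F) (auto elim: contr.cases)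
  done

lemma step_closed: "step a b \<Longrightarrow> closed a \<Longrightarrow> closed b"
  unfolding step_iff closed_def
  apply clarify
  apply (erule contr.cases)
    apply (auto simp: closed_plug intro!: closed_subst cca_liftc)
  done

lemma steps_closed: "steps a b \<Longrightarrow> closed a \<Longrightarrow> closed b"
  unfolding steps_def by (induction rule: rtranclp_induct) (auto intro: step_closed)




lemma tilde_aux_refl: "tilde_aux R t t"
  by (induction t) (auto intro: tilde_aux.intros)

lemma tilde_aux_mono: "tilde_aux R a b \<Longrightarrow> R \<subseteq> S \<Longrightarrow> tilde_aux S a b"
  by (induction rule: tilde_aux.induct) (auto intro: tilde_aux.intros)

lemma tilde_aux_sub: "tilde_aux R a b \<Longrightarrow> R \<subseteq> tilde S \<Longrightarrow> tilde_aux S a b"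
  by (induction rule: tilde_aux.induct) (auto intro: tilde_aux.intros simp: tilde_def)

lemma tilde_sub: assumes "R \<subseteq> tilde S" shows "tilde R \<subseteq> tilde S"
  using tilde_aux_sub[OF _ assms] by (auto simp: tilde_def)

lemma tilde_mono: "R \<subseteq> S \<Longrightarrow> tilde R \<subseteq> tilde S"
  unfolding tilde_def using tilde_aux_mono by blast

lemma env_sub_tilde: "is_env R \<Longrightarrow> R \<subseteq> tilde R"
  unfolding is_env_def tilde_def by (auto intro: tilde_aux.base)

lemma tilde_aux_val: "tilde_aux R a b \<Longrightarrow> is_env R \<Longrightarrow> is_val a \<Longrightarrow> is_val b"
  by (induction rule: tilde_aux.induct) (auto simp: is_env_def)

lemma tilde_aux_val': "tilde_aux R a b \<Longrightarrow> is_env R \<Longrightarrow> is_val b \<Longrightarrow> is_val a"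
  by (induction rule: tilde_aux.induct) (auto simp: is_env_def)

lemma env_closed_at: "is_env R \<Longrightarrow> (a, b) \<in> R \<Longrightarrow> closed_at k a \<and> closed_at k b"
  unfolding is_env_def closed_def by (auto intro: closed_at_mono)

lemma tilde_aux_lift: "tilde_aux R a b \<Longrightarrow> is_env R \<Longrightarrow> tilde_aux R (lift k a) (lift k b)"
proof (induction arbitrary: k rule: tilde_aux.induct)
  case (base s t) then show ?case
    using env_closed_at[OF base(2) base(1)] by (simp add: lift_closed tilde_aux.base)
qed (auto intro: tilde_aux.intros)

lemma tilde_aux_subst: "tilde_aux R a b \<Longrightarrow> is_env R \<Longrightarrow> tilde_aux R w0 w1
   \<Longrightarrow> tilde_aux R (subst k w0 a) (subst k w1 b)"
proof (induction arbitrary: k w0 w1 rule: tilde_aux.induct)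
  case (base s t) then show ?case
    using env_closed_at[OF base(2) base(1)] by (simp add: subst_closed tilde_aux.base)
next
  case (var i) then show ?case by (auto intro: tilde_aux.intros)
next
  case (lam s t) then show ?case by (simp add: tilde_aux.lam tilde_aux_lift)
next
  case (app s1 t1 s2 t2) then show ?case by (simp add: tilde_aux.app)
next
  case (shft s t) then show ?case by (simp add: tilde_aux.shft tilde_aux_lift)
next
  case (rst s t) then show ?case by (simp add: tilde_aux.rst)
qed

lemma hat_sub: "hat R F0 F1 \<Longrightarrow> R \<subseteq> tilde S \<Longrightarrow> hat S F0 F1"
  by (induction rule: hat.induct) (auto intro: hat.intros dest: tilde_sub)

lemma hat_mono: "hat R F0 F1 \<Longrightarrow> R \<subseteq> S \<Longrightarrow> hat S F0 F1"
  by (induction rule: hat.induct) (auto intro: hat.intros dest: tilde_mono)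

lemma hat_plug: "hat R F0 F1 \<Longrightarrow> tilde_aux R a b \<Longrightarrow> tilde_aux R (plug F0 a) (plug F1 b)"
  by (induction rule: hat.induct) (auto intro: tilde_aux.intros simp: tilde_def)

lemma hat_plug_liftc: "hat R F0 F1 \<Longrightarrow> is_env R \<Longrightarrow> tilde_aux R a b
   \<Longrightarrow> tilde_aux R (plug (liftc k F0) a) (plug (liftc k F1) b)"
  by (induction rule: hat.induct) (auto intro: tilde_aux.intros tilde_aux_lift simp: tilde_def)

lemma hat_props: "hat R F0 F1 \<Longrightarrow> ectx F0 \<and> ectx F1 \<and> (pctx F0 \<longleftrightarrow> pctx F1) \<and> closed_ctx F0 \<and> closed_ctx F1
   \<and> (F0 = Hole \<longleftrightarrow> F1 = Hole) \<and> ((\<exists>G. F0 = CReset G) \<longleftrightarrow> (\<exists>G. F1 = CReset G))"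
  by (induction rule: hat.induct) (auto simp: tilde_def)

lemma hat_refl: "ectx F \<Longrightarrow> closed_ctx F \<Longrightarrow> hat R F F"
  by (induction F) (auto intro!: hat.intros tilde_aux_refl simp: tilde_def)

lemma hat_ccomp: "hat R A0 A1 \<Longrightarrow> hat R B0 B1 \<Longrightarrow> hat R (ccomp A0 B0) (ccomp A1 B1)"
  by (induction rule: hat.induct) (auto intro: hat.intros)

lemma hat_split: "hat R G0 G1 \<Longrightarrow> \<not> pctx G0 \<Longrightarrow> \<exists>O0 O1 I0 I1. G0 = ccomp O0 (CReset I0) \<and>
   G1 = ccomp O1 (CReset I1) \<and> hat R O0 O1 \<and> hat R I0 I1 \<and> pctx I0 \<and> pctx I1"
proof (induction rule: hat.induct)
  case hole then show ?case by simp
next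
  case (appr F0 F1 v0 v1)
  then obtain O0 O1 I0 I1 where "F0 = ccomp O0 (CReset I0) \<and>
   F1 = ccomp O1 (CReset I1) \<and> hat R O0 O1 \<and> hat R I0 I1 \<and> pctx I0 \<and> pctx I1" by auto
  with appr show ?case
    by (intro exI[of _ "CAppR v0 O0"] exI[of _ "CAppR v1 O1"] exI[of _ I0] exI[of _ I1]) (auto intro: hat.intros)
next
  case (appl F0 F1 t0 t1)
  then obtain O0 O1 I0 I1 where "F0 = ccomp O0 (CReset I0) \<and>
   F1 = ccomp O1 (CReset I1) \<and> hat R O0 O1 \<and> hat R I0 I1 \<and> pctx I0 \<and> pctx I1" by auto
  with appl show ?case
    by (intro exI[of _ "CAppL O0 t0"] exI[of _ "CAppL O1 t1"] exI[of _ I0] exI[of _ I1]) (auto intro: hat.intros)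
next
  case (rst F0 F1)
  show ?case
  proof (cases "pctx F0")
    case True
    with rst hat_props[OF rst(1)] show ?thesis
      by (intro exI[of _ Hole] exI[of _ Hole] exI[of _ F0] exI[of _ F1]) (auto intro: hat.intros)
  next
    case False
    with rst obtain O0 O1 I0 I1 where "F0 = ccomp O0 (CReset I0) \<and>
     F1 = ccomp O1 (CReset I1) \<and> hat R O0 O1 \<and> hat R I0 I1 \<and> pctx I0 \<and> pctx I1" by auto
    then show ?thesis
      by (intro exI[of _ "CReset O0"] exI[of _ "CReset O1"] exI[of _ I0] exI[of _ I1]) (auto intro: hat.intros)
  qed
qed

lemma corr: "tilde_aux R (plug F0 r) u1 \<Longrightarrow> is_env R \<Longrightarrow> ectx F0 \<Longrightarrow> closed (plug F0 r) \<Longrightarrow> closed u1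
   \<Longrightarrow> \<exists>F1 r1. u1 = plug F1 r1 \<and> hat R F0 F1 \<and> tilde_aux R r r1"
proof (induction F0 arbitrary: u1)
  case Hole then show ?case by (intro exI[of _ Hole] exI[of _ u1]) (auto intro: hat.intros)
next
  case (CAppL F u)
  from CAppL.prems(1) obtain a b where u1: "u1 = App a b" "tilde_aux R (plug F r) a" "tilde_aux R u b"
    using CAppL.prems(2) by (cases rule: tilde_aux.cases) (auto simp: is_env_def)
  with CAppL.prems have "closed (plug F r)" "closed a" "closed u" "closed b" by (auto simp: closed_def)
  with CAppL.IH[OF u1(2)] CAppL.prems obtain F1 r1 where "a = plug F1 r1" "hat R F F1" "tilde_aux R r r1" by auto
  with u1 \<open>closed u\<close> \<open>closed b\<close> show ?case
    by (intro exI[of _ "CAppL F1 b"] exI[of _ r1]) (auto intro: hat.intros simp: tilde_def)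
next
  case (CAppR v F)
  from CAppR.prems(1) obtain a b where u1: "u1 = App a b" "tilde_aux R v a" "tilde_aux R (plug F r) b"
    using CAppR.prems(2) by (cases rule: tilde_aux.cases) (auto simp: is_env_def)
  with CAppR.prems have "closed (plug F r)" "closed a" "closed v" "closed b" by (auto simp: closed_def)
  with CAppR.IH[OF u1(3)] CAppR.prems obtain F1 r1 where "b = plug F1 r1" "hat R F F1" "tilde_aux R r r1" by auto
  moreover have "is_val a" using tilde_aux_val u1 CAppR.prems by auto
  ultimately show ?case using u1 \<open>closed v\<close> \<open>closed a\<close> CAppR.prems
    by (intro exI[of _ "CAppR a F1"] exI[of _ r1]) (auto intro: hat.intros simp: tilde_def)
next
  case (CReset F)
  from CReset.prems(1) obtain a where u1: "u1 = Reset a" "tilde_aux R (plug F r) a"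
    using CReset.prems(2) by (cases rule: tilde_aux.cases) (auto simp: is_env_def)
  with CReset.prems have "closed (plug F r)" "closed a" by (auto simp: closed_def)
  with CReset.IH[OF u1(2)] CReset.prems obtain F1 r1 where "a = plug F1 r1" "hat R F F1" "tilde_aux R r r1" by auto
  with u1 show ?case
    by (intro exI[of _ "CReset F1"] exI[of _ r1]) (auto intro: hat.intros)
qed




definition C1 :: "envrel \<Rightarrow> bool" where
  "C1 X \<longleftrightarrow> (\<forall>E t0 t1. (E, t0, t1) \<in> snd X \<and> \<not> (is_prog t0 \<and> is_prog t1) \<longrightarrow>
       (\<forall>E0 E1. pctx E0 \<and> pctx E1 \<and> hat E E0 E1 \<longrightarrow>
          (E, Reset (plug E0 t0), Reset (plug E1 t1)) \<in> snd X))"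

definition C2 :: "envrel \<Rightarrow> bool" where
  "C2 X \<longleftrightarrow> (\<forall>E p0 p1. (E, p0, p1) \<in> snd X \<and> is_prog p0 \<and> is_prog p1 \<longrightarrow>
       (\<forall>p0'. step p0 p0' \<and> is_prog p0' \<longrightarrow>
          (\<exists>p1'. steps p1 p1' \<and> is_prog p1' \<and> (E, p0', p1') \<in> snd X)) \<and>
       (\<forall>v0. step p0 v0 \<and> is_val v0 \<longrightarrow>
          (\<exists>v1. steps p1 v1 \<and> is_val v1 \<and> {(v0, v1)} \<union> E \<in> fst X)))"

definition C2' :: "envrel \<Rightarrow> bool" where
  "C2' X \<longleftrightarrow> (\<forall>E p0 p1. (E, p0, p1) \<in> snd X \<and> is_prog p0 \<and> is_prog p1 \<longrightarrow>
       (\<forall>p1'. step p1 p1' \<and> is_prog p1' \<longrightarrow>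
          (\<exists>p0'. steps p0 p0' \<and> is_prog p0' \<and> (E, p0', p1') \<in> snd X)) \<and>
       (\<forall>v1. step p1 v1 \<and> is_val v1 \<longrightarrow>
          (\<exists>v0. steps p0 v0 \<and> is_val v0 \<and> {(v0, v1)} \<union> E \<in> fst X)))"

definition C3 :: "envrel \<Rightarrow> bool" where
  "C3 X \<longleftrightarrow> (\<forall>E \<in> fst X. \<forall>t0 t1 v0 v1. (Lam t0, Lam t1) \<in> E \<and> (v0, v1) \<in> tilde E
         \<and> is_val v0 \<and> is_val v1 \<longrightarrow>
       (E, subst 0 v0 t0, subst 0 v1 t1) \<in> snd X)"

lemma prog_bisim_iff: "prog_bisim X \<longleftrightarrow> envrel_wf X \<and> C1 X \<and> C2 X \<and> C2' X \<and> C3 X"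
  unfolding prog_bisim_def C1_def C2_def C2'_def C3_def by blast

definition fwd :: "envrel \<Rightarrow> bool" where
  "fwd X \<longleftrightarrow> envrel_wf X \<and> C1 X \<and> C2 X \<and> C3 X"

definition convE :: "env \<Rightarrow> env" where
  "convE E = {(b, a). (a, b) \<in> E}"

definition convX :: "envrel \<Rightarrow> envrel" where
  "convX X = (convE ` fst X, (\<lambda>(E, a, b). (convE E, b, a)) ` snd X)"

lemma convE_convE[simp]: "convE (convE E) = E"
  unfolding convE_def by auto

lemma mem_convE[simp]: "(a, b) \<in> convE E \<longleftrightarrow> (b, a) \<in> E"
  unfolding convE_def by auto

lemma convE_inj[simp]: "convE A = convE B \<longleftrightarrow> A = B"
  by (metis convE_convE)

lemma mem_fst_convX[simp]: "E \<in> fst (convX X) \<longleftrightarrow> convE E \<in> fst X"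
  unfolding convX_def by (auto intro: image_eqI[of _ _ "convE E"])

lemma mem_snd_convX[simp]: "(E, a, b) \<in> snd (convX X) \<longleftrightarrow> (convE E, b, a) \<in> snd X"
  unfolding convX_def by (auto intro: image_eqI[of _ _ "(convE E, b, a)"])

lemma convX_convX[simp]: "convX (convX X) = X"
proof -
  have "fst (convX (convX X)) = fst X" by (auto simp del: mem_fst_convX simp: convX_def image_image)
  moreover have "snd (convX (convX X)) = snd X"
  proof
    show "snd (convX (convX X)) \<subseteq> snd X" by (auto simp del: mem_snd_convX simp: convX_def)
    show "snd X \<subseteq> snd (convX (convX X))"
    proof
      fix p assume "p \<in> snd X"
      then show "p \<in> snd (convX (convX X))" by (cases p) auto
    qed
  qed
  ultimately show ?thesis by (simp add: prod_eq_iff)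
qed

lemma convE_sub[simp]: "convE A \<subseteq> convE B \<longleftrightarrow> A \<subseteq> B"
  unfolding convE_def by auto

lemma convE_un[simp]: "convE (A \<union> B) = convE A \<union> convE B"
  unfolding convE_def by auto

lemma convE_insert[simp]: "convE (insert (a, b) E) = insert (b, a) (convE E)"
  unfolding convE_def by auto

lemma convE_single[simp]: "convE {(a, b)} = {(b, a)}"
  unfolding convE_def by auto

lemma tilde_aux_conv1: "tilde_aux R a b \<Longrightarrow> tilde_aux (convE R) b a"
  by (induction rule: tilde_aux.induct) (auto intro: tilde_aux.intros)

lemma tilde_aux_conv[simp]: "tilde_aux (convE R) a b \<longleftrightarrow> tilde_aux R b a"
  using tilde_aux_conv1[of "convE R" a b] tilde_aux_conv1[of R b a] by auto

lemma tilde_conv[simp]: "tilde (convE R) = convE (tilde R)"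
  apply (rule set_eqI)
  subgoal for x by (cases x) (auto simp add: tilde_def)
  done

lemma mem_tilde_conv: "(a, b) \<in> tilde (convE R) \<longleftrightarrow> (b, a) \<in> tilde R"
  by simp

lemma hat_conv1: "hat R F0 F1 \<Longrightarrow> hat (convE R) F1 F0"
  by (induction rule: hat.induct) (auto intro: hat.intros)

lemma hat_conv[simp]: "hat (convE R) F0 F1 \<longleftrightarrow> hat R F1 F0"
  using hat_conv1[of "convE R" F0 F1] hat_conv1[of R F1 F0] by auto

lemma is_env_conv[simp]: "is_env (convE R) \<longleftrightarrow> is_env R"
  unfolding is_env_def convE_def by auto

lemma wf_conv: "envrel_wf X \<Longrightarrow> envrel_wf (convX X)"
  unfolding envrel_wf_def by (auto simp: convX_def)

lemma C1_conv: "C1 X \<Longrightarrow> C1 (convX X)"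
  unfolding C1_def by (auto simp del: mem_fst_convX mem_snd_convX simp: mem_snd_convX)

lemma C3_conv: "C3 X \<Longrightarrow> C3 (convX X)"
  unfolding C3_def by auto

lemma C2_conv: "C2' X \<Longrightarrow> C2 (convX X)"
  unfolding C2_def
proof (intro allI impI conjI)
  fix E p0 p1 p0'
  assume c: "C2' X" and h: "(E, p0, p1) \<in> snd (convX X) \<and> is_prog p0 \<and> is_prog p1"
    and s: "step p0 p0' \<and> is_prog p0'"
  from h have "(convE E, p1, p0) \<in> snd X" by simp
  with c h s obtain q where "steps p1 q" "is_prog q" "(convE E, q, p0') \<in> snd X"
    unfolding C2'_def by blast
  then show "\<exists>p1'. steps p1 p1' \<and> is_prog p1' \<and> (E, p0', p1') \<in> snd (convX X)" by auto
next
  fix E p0 p1 v0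
  assume c: "C2' X" and h: "(E, p0, p1) \<in> snd (convX X) \<and> is_prog p0 \<and> is_prog p1"
    and s: "step p0 v0 \<and> is_val v0"
  from h have "(convE E, p1, p0) \<in> snd X" by simp
  with c h s obtain q where "steps p1 q" "is_val q" "{(q, v0)} \<union> convE E \<in> fst X"
    unfolding C2'_def by blast
  then show "\<exists>v1. steps p1 v1 \<and> is_val v1 \<and> {(v0, v1)} \<union> E \<in> fst (convX X)" by auto
qed

lemma C2'_conv: "C2 (convX X) \<Longrightarrow> C2' X"
  unfolding C2'_def
proof (intro allI impI conjI)
  fix E p0 p1 p1'
  assume c: "C2 (convX X)" and h: "(E, p0, p1) \<in> snd X \<and> is_prog p0 \<and> is_prog p1"
    and s: "step p1 p1' \<and> is_prog p1'"
  from h have "(convE E, p1, p0) \<in> snd (convX X)" by simp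
  with c h s obtain q where "steps p0 q" "is_prog q" "(convE E, p1', q) \<in> snd (convX X)"
    unfolding C2_def by blast
  then show "\<exists>p0'. steps p0 p0' \<and> is_prog p0' \<and> (E, p0', p1') \<in> snd X" by auto
next
  fix E p0 p1 v1
  assume c: "C2 (convX X)" and h: "(E, p0, p1) \<in> snd X \<and> is_prog p0 \<and> is_prog p1"
    and s: "step p1 v1 \<and> is_val v1"
  from h have "(convE E, p1, p0) \<in> snd (convX X)" by simp
  with c h s obtain q where "steps p0 q" "is_val q" "{(v1, q)} \<union> convE E \<in> fst (convX X)"
    unfolding C2_def by blast
  then show "\<exists>v0. steps p0 v0 \<and> is_val v0 \<and> {(v0, v1)} \<union> E \<in> fst X" by auto
qed




definition YA :: "envrel \<Rightarrow> (env \<times> tm \<times> tm) set" where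
  "YA X = {(E', plug G0 s0, plug G1 s1) | E' E G0 G1 s0 s1. (E, s0, s1) \<in> snd X \<and> hat E G0 G1 \<and>
      (is_prog s0 \<and> is_prog s1 \<or> pctx G0 \<and> pctx G1) \<and> is_env E' \<and> E' \<subseteq> tilde E}"

definition YB :: "envrel \<Rightarrow> (env \<times> tm \<times> tm) set" where
  "YB X = {(E', u0, u1) | E' E u0 u1. E \<in> fst X \<and> (u0, u1) \<in> tilde E \<and> is_env E' \<and> E' \<subseteq> tilde E}"

definition YE :: "envrel \<Rightarrow> env set" where
  "YE X = {E'. is_env E' \<and> (\<exists>E \<in> fst X. E' \<subseteq> tilde E)}"

definition Y :: "envrel \<Rightarrow> envrel" where
  "Y X = (YE X, YA X \<union> YB X)"

lemma YA_I: "(E, s0, s1) \<in> snd X \<Longrightarrow> hat E G0 G1 \<Longrightarrow> is_prog s0 \<and> is_prog s1 \<or> pctx G0 \<and> pctx G1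
   \<Longrightarrow> is_env E' \<Longrightarrow> E' \<subseteq> tilde E \<Longrightarrow> (E', plug G0 s0, plug G1 s1) \<in> snd (Y X)"
  unfolding Y_def YA_def snd_conv by blast

lemma YB_I: "E \<in> fst X \<Longrightarrow> (u0, u1) \<in> tilde E \<Longrightarrow> is_env E' \<Longrightarrow> E' \<subseteq> tilde E
   \<Longrightarrow> (E', u0, u1) \<in> snd (Y X)"
  unfolding Y_def YB_def snd_conv by blast

lemma YE_I: "E \<in> fst X \<Longrightarrow> is_env E' \<Longrightarrow> E' \<subseteq> tilde E \<Longrightarrow> E' \<in> fst (Y X)"
  unfolding Y_def YE_def fst_conv by blast

lemma wf_triple: "envrel_wf X \<Longrightarrow> (E, a, b) \<in> snd X \<Longrightarrow> is_env E \<and> closed a \<and> closed b"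
  unfolding envrel_wf_def by blast

lemma wf_env: "envrel_wf X \<Longrightarrow> E \<in> fst X \<Longrightarrow> is_env E"
  unfolding envrel_wf_def by blast

lemma mkA:
  assumes f: "fwd X" and x: "(E, s0, s1) \<in> snd X" and h: "hat E G0 G1"
    and e: "is_env E'" "E' \<subseteq> tilde E"
  shows "(E', plug G0 s0, plug G1 s1) \<in> snd (Y X)"
proof (cases "is_prog s0 \<and> is_prog s1 \<or> pctx G0")
  case True
  with hat_props[OF h] show ?thesis using YA_I[OF x h _ e] by blast
next
  case False
  then obtain O0 O1 I0 I1 where sp: "G0 = ccomp O0 (CReset I0)" "G1 = ccomp O1 (CReset I1)"
    "hat E O0 O1" "hat E I0 I1" "pctx I0" "pctx I1" using hat_split[OF h] by blast
  from f have "C1 X" unfolding fwd_def by blast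
  with False x sp have "(E, Reset (plug I0 s0), Reset (plug I1 s1)) \<in> snd X"
    unfolding C1_def by blast
  from YA_I[OF this sp(3) _ e] sp show ?thesis by simp
qed

lemma wf_Y: "fwd X \<Longrightarrow> envrel_wf (Y X)"
  unfolding envrel_wf_def
proof (intro conjI ballI)
  assume f: "fwd X"
  fix E assume "E \<in> fst (Y X)" then show "is_env E" unfolding Y_def YE_def by auto
next
  assume f: "fwd X"
  then have wf: "envrel_wf X" unfolding fwd_def by blast
  fix p assume p: "p \<in> snd (Y X)"
  obtain E a b where pe: "p = (E, a, b)" by (cases p)
  have "is_env E \<and> closed a \<and> closed b"
  proof (cases "(E, a, b) \<in> YA X")
    case True
    then obtain E2 G0 G1 s0 s1 where "a = plug G0 s0" "b = plug G1 s1" "(E2, s0, s1) \<in> snd X"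
      "hat E2 G0 G1" "is_env E" unfolding YA_def by blast
    with wf_triple[OF wf] hat_props show ?thesis
      by (auto simp: closed_def closed_plug cca0)
  next
    case False
    with p pe show ?thesis unfolding Y_def YB_def tilde_def by auto
  qed
  then show "case p of (E, t0, t1) \<Rightarrow> is_env E \<and> closed t0 \<and> closed t1" using pe by simp
qed

lemma C3_Y: "fwd X \<Longrightarrow> C3 (Y X)"
  unfolding C3_def
proof (intro ballI allI impI)
  fix E' t0 t1 v0 v1
  assume f: "fwd X" and e: "E' \<in> fst (Y X)"
    and h: "(Lam t0, Lam t1) \<in> E' \<and> (v0, v1) \<in> tilde E' \<and> is_val v0 \<and> is_val v1"
  from e obtain E where E: "E \<in> fst X" "is_env E'" "E' \<subseteq> tilde E" unfolding Y_def YE_def by auto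
  have envE: "is_env E" using f E unfolding fwd_def envrel_wf_def by blast
  have vv: "(v0, v1) \<in> tilde E" using h tilde_sub[OF E(3)] by blast
  have "(Lam t0, Lam t1) \<in> tilde E" using h E by blast
  then have tl: "tilde_aux E (Lam t0) (Lam t1)" and cl: "closed (Lam t0)" "closed (Lam t1)"
    unfolding tilde_def by auto
  from tl show "(E', subst 0 v0 t0, subst 0 v1 t1) \<in> snd (Y X)"
  proof (cases rule: tilde_aux.cases)
    case base
    with f E h vv have "(E, subst 0 v0 t0, subst 0 v1 t1) \<in> snd X"
      unfolding fwd_def C3_def by blast
    from mkA[OF f this hat.hole E(2,3)] show ?thesis by simp
  next
    case lam
    have "tilde_aux E (subst 0 v0 t0) (subst 0 v1 t1)"
      using tilde_aux_subst[OF lam envE] vv unfolding tilde_def by auto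
    moreover have "closed (subst 0 v0 t0)" "closed (subst 0 v1 t1)"
      using cl vv unfolding closed_def tilde_def by (auto intro: closed_subst)
    ultimately show ?thesis using YB_I[OF E(1) _ E(2,3)] unfolding tilde_def by blast
  qed
qed

lemma C1_Y: "fwd X \<Longrightarrow> C1 (Y X)"
  unfolding C1_def
proof (intro allI impI)
  fix E' t0 t1 E0 E1
  assume f: "fwd X" and h: "(E', t0, t1) \<in> snd (Y X) \<and> \<not> (is_prog t0 \<and> is_prog t1)"
    and c: "pctx E0 \<and> pctx E1 \<and> hat E' E0 E1"
  have wf: "envrel_wf X" and c1: "C1 X" using f unfolding fwd_def by auto
  show "(E', Reset (plug E0 t0), Reset (plug E1 t1)) \<in> snd (Y X)"
  proof (cases "(E', t0, t1) \<in> YA X")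
    case True
    then obtain E G0 G1 s0 s1 where A: "t0 = plug G0 s0" "t1 = plug G1 s1" "(E, s0, s1) \<in> snd X"
      "hat E G0 G1" "is_prog s0 \<and> is_prog s1 \<or> pctx G0 \<and> pctx G1" "is_env E'" "E' \<subseteq> tilde E"
      unfolding YA_def by blast
    have hE: "hat E E0 E1" using hat_sub c A(7) by blast
    show ?thesis
    proof (cases "is_prog s0 \<and> is_prog s1")
      case True
      have "hat E (CReset (ccomp E0 G0)) (CReset (ccomp E1 G1))"
        by (intro hat.rst hat_ccomp hE A(4))
      from YA_I[OF A(3) this _ A(6,7)] True A show ?thesis by simp
    next
      case False
      with A have pp: "pctx G0" "pctx G1" by auto
      have "hat E (ccomp E0 G0) (ccomp E1 G1)" by (intro hat_ccomp hE A(4))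
      with c1 A(3) False pp c have "(E, Reset (plug E0 (plug G0 s0)), Reset (plug E1 (plug G1 s1))) \<in> snd X"
        unfolding C1_def using pctx_ccomp[of E0 G0] pctx_ccomp[of E1 G1] by fastforce
      from mkA[OF f this hat.hole A(6,7)] A show ?thesis by simp
    qed
  next
    case False
    with h obtain E where B: "E \<in> fst X" "(t0, t1) \<in> tilde E" "is_env E'" "E' \<subseteq> tilde E"
      unfolding Y_def YB_def by auto
    have hE: "hat E E0 E1" using hat_sub c B(4) by blast
    have "(Reset (plug E0 t0), Reset (plug E1 t1)) \<in> tilde E"
      using B(2) hat_plug[OF hE] hat_props[OF hE]
      by (auto simp: tilde_def closed_def closed_plug cca0 intro: tilde_aux.rst)
    from YB_I[OF B(1) this B(3,4)] show ?thesis .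
  qed
qed




lemma prog_shape: "is_prog (plug F x) \<Longrightarrow> F = Hole \<and> is_prog x \<or> (\<exists>G. F = CReset G)"
  by (cases F) auto

lemma hat_prog: "hat R F0 F1 \<Longrightarrow> is_prog (plug F0 y0) \<Longrightarrow> (is_prog y0 \<Longrightarrow> is_prog y1) \<Longrightarrow> is_prog (plug F1 y1)"
  using prog_shape[of F0 y0] hat_props[of R F0 F1] by auto

lemma hat_val: "hat R F0 F1 \<Longrightarrow> is_val (plug F0 y0) \<Longrightarrow> F0 = Hole \<and> F1 = Hole"
  using is_val_plug[of F0 y0] hat_props[of R F0 F1] by auto

lemma is_env_un: "is_env A \<Longrightarrow> is_env B \<Longrightarrow> is_env (A \<union> B)"
  unfolding is_env_def by auto

lemma env_ext:
  assumes f: "fwd X" and E2: "{(v0, v1)} \<union> E \<in> fst X" and e: "is_env E'" "E' \<subseteq> tilde E"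
  shows "{(v0, v1)} \<union> E' \<in> fst (Y X)"
proof -
  have env2: "is_env ({(v0, v1)} \<union> E)" using f E2 unfolding fwd_def envrel_wf_def by blast
  then have "is_env {(v0, v1)}" unfolding is_env_def by auto
  then have "is_env ({(v0, v1)} \<union> E')" using e is_env_un by blast
  moreover have "{(v0, v1)} \<union> E' \<subseteq> tilde ({(v0, v1)} \<union> E)"
    using env_sub_tilde[OF env2] e(2) tilde_mono[of E "{(v0, v1)} \<union> E"] by blast
  ultimately show ?thesis using YE_I[OF E2] by blast
qed

lemma core_A:
  assumes f: "fwd X" and m: "(E', p0, p1) \<in> YA X" and pp: "is_prog p0" "is_prog p1" and st: "step p0 r0"
  shows "\<exists>r1. steps p1 r1 \<and> (is_prog r0 \<longrightarrow> is_prog r1 \<and> (E', r0, r1) \<in> snd (Y X))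
          \<and> (is_val r0 \<longrightarrow> is_val r1 \<and> {(r0, r1)} \<union> E' \<in> fst (Y X))"
proof -
  obtain E G0 G1 s0 s1 where A: "p0 = plug G0 s0" "p1 = plug G1 s1" "(E, s0, s1) \<in> snd X"
      "hat E G0 G1" "is_prog s0 \<and> is_prog s1 \<or> pctx G0 \<and> pctx G1" "is_env E'" "E' \<subseteq> tilde E"
    using m unfolding YA_def by blast
  have c2: "C2 X" and wf: "envrel_wf X" using f unfolding fwd_def by auto
  have hp: "ectx G0" "ectx G1" "closed_ctx G0" "closed_ctx G1" "G0 = Hole \<longleftrightarrow> G1 = Hole"
    "(\<exists>G. G0 = CReset G) \<longleftrightarrow> (\<exists>G. G1 = CReset G)" using hat_props[OF A(4)] by auto
  show ?thesis
  proof (cases "G0 = Hole")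
    case True
    then have G1: "G1 = Hole" using hp by auto
    with True A pp have s: "is_prog s0" "is_prog s1" "p0 = s0" "p1 = s1" by auto
    then obtain a where "s0 = Reset a" by (cases s0) auto
    with st s have "is_prog r0 \<or> is_val r0" using step_prog by auto
    then show ?thesis
    proof
      assume r0: "is_prog r0"
      with c2 A(3) s st obtain r1 where "steps p1 r1" "is_prog r1" "(E, r0, r1) \<in> snd X"
        unfolding C2_def by blast
      moreover from mkA[OF f this(3) hat.hole A(6,7)] have "(E', r0, r1) \<in> snd (Y X)" by simp
      ultimately show ?thesis using r0 by (cases r0) auto
    next
      assume r0: "is_val r0"
      with c2 A(3) s st obtain r1 where "steps p1 r1" "is_val r1" "{(r0, r1)} \<union> E \<in> fst X"
        unfolding C2_def by blast
      moreover from env_ext[OF f this(3) A(6,7)] have "{(r0, r1)} \<union> E' \<in> fst (Y X)" .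
      ultimately show ?thesis using r0 by (cases r0) auto
    qed
  next
    case False
    with prog_shape[of G0 s0] A(1) pp obtain G' where G0: "G0 = CReset G'" by auto
    then have "\<not> pctx G0" by simp
    with A(5) have s: "is_prog s0" "is_prog s1" by auto
    then obtain a where sa: "s0 = Reset a" by (cases s0) auto
    obtain s' where s': "step s0 s'" "r0 = plug G0 s'" using decomp_reset[OF hp(1)] st A(1) sa by blast
    from hp G0 obtain G1' where G1: "G1 = CReset G1'" by auto
    have nv: "\<not> is_val r0" using s'(2) G0 by simp
    from s' sa have "is_prog s' \<or> is_val s'" using step_prog by auto
    then show ?thesis
    proof
      assume r0: "is_prog s'"
      with c2 A(3) s s' obtain s1' where "steps s1 s1'" "is_prog s1'" "(E, s', s1') \<in> snd X"
        unfolding C2_def by blast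
      moreover from mkA[OF f this(3) A(4) A(6,7)] have "(E', plug G0 s', plug G1 s1') \<in> snd (Y X)" .
      moreover have "steps p1 (plug G1 s1')" using steps_ctx[OF \<open>steps s1 s1'\<close> hp(2)] A(2) by simp
      ultimately show ?thesis using s'(2) nv G1 by auto
    next
      assume r0: "is_val s'"
      with c2 A(3) s s' obtain v1 where v1: "steps s1 v1" "is_val v1" "{(s', v1)} \<union> E \<in> fst X"
        unfolding C2_def by blast
      have env2: "is_env ({(s', v1)} \<union> E)" using wf v1(3) unfolding envrel_wf_def by blast
      have h2: "hat ({(s', v1)} \<union> E) G0 G1" using hat_mono[OF A(4)] by blast
      have "tilde_aux ({(s', v1)} \<union> E) (plug G0 s') (plug G1 v1)"
        by (rule hat_plug[OF h2]) (simp add: tilde_aux.base)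
      moreover have "closed s'" "closed v1" using env2 unfolding is_env_def by auto
      ultimately have "(plug G0 s', plug G1 v1) \<in> tilde ({(s', v1)} \<union> E)"
        using hp unfolding tilde_def by (auto simp: closed_def closed_plug cca0)
      moreover have "E' \<subseteq> tilde ({(s', v1)} \<union> E)" using A(7) tilde_mono[of E "{(s', v1)} \<union> E"] by blast
      ultimately have "(E', plug G0 s', plug G1 v1) \<in> snd (Y X)" using YB_I[OF v1(3) _ A(6)] by blast
      moreover have "steps p1 (plug G1 v1)" using steps_ctx[OF v1(1) hp(2)] A(2) by simp
      ultimately show ?thesis using s'(2) nv G1 by auto
    qed
  qed
qed




lemma tinv_app: "tilde_aux R (App a b) c \<Longrightarrow> is_env R \<Longrightarrow> \<exists>a' b'. c = App a' b' \<and> tilde_aux R a a' \<and> tilde_aux R b b'"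
  by (erule tilde_aux.cases) (auto simp: is_env_def)

lemma tinv_reset: "tilde_aux R (Reset a) c \<Longrightarrow> is_env R \<Longrightarrow> \<exists>a'. c = Reset a' \<and> tilde_aux R a a'"
  by (erule tilde_aux.cases) (auto simp: is_env_def)

lemma tinv_shift: "tilde_aux R (Shift a) c \<Longrightarrow> is_env R \<Longrightarrow> \<exists>a'. c = Shift a' \<and> tilde_aux R a a'"
  by (erule tilde_aux.cases) (auto simp: is_env_def)

lemma tinv_lam: "tilde_aux R (Lam a) c \<Longrightarrow> (Lam a, c) \<in> R \<or> (\<exists>a'. c = Lam a' \<and> tilde_aux R a a')"
  by (erule tilde_aux.cases) auto

lemma finB:
  assumes E: "E \<in> fst X" "is_env E'" "E' \<subseteq> tilde E" and envE: "is_env E"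
    and s: "step u1 r1" and cl: "closed u1" "closed r0" and t: "tilde_aux E r0 r1"
    and pr: "is_prog r0 \<longrightarrow> is_prog r1" and vl: "is_val r0 \<longrightarrow> is_val r1"
  shows "\<exists>r1. steps u1 r1 \<and> (is_prog r0 \<longrightarrow> is_prog r1 \<and> (E', r0, r1) \<in> snd (Y X))
          \<and> (is_val r0 \<longrightarrow> is_val r1 \<and> {(r0, r1)} \<union> E' \<in> fst (Y X))"
proof (intro exI conjI impI)
  show "steps u1 r1" using s unfolding steps_def by auto
  have cr1: "closed r1" using step_closed s cl by blast
  have tr: "(r0, r1) \<in> tilde E" using t cl cr1 unfolding tilde_def by auto
  show "is_prog r1" if "is_prog r0" using pr that by auto
  show "(E', r0, r1) \<in> snd (Y X)" using YB_I[OF E(1) tr E(2,3)] .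
  show "is_val r1" if "is_val r0" using vl that by auto
  show "{(r0, r1)} \<union> E' \<in> fst (Y X)" if "is_val r0"
  proof (rule YE_I[OF E(1)])
    show "is_env ({(r0, r1)} \<union> E')" using E(2) that vl cl cr1 unfolding is_env_def by auto
    show "{(r0, r1)} \<union> E' \<subseteq> tilde E" using tr E(3) by blast
  qed
qed

lemma core_B:
  assumes f: "fwd X" and m: "(E', u0, u1) \<in> YB X" and pp: "is_prog u0" and st: "step u0 r0"
  shows "\<exists>r1. steps u1 r1 \<and> (is_prog r0 \<longrightarrow> is_prog r1 \<and> (E', r0, r1) \<in> snd (Y X))
          \<and> (is_val r0 \<longrightarrow> is_val r1 \<and> {(r0, r1)} \<union> E' \<in> fst (Y X))"
proof -
  obtain E where E: "E \<in> fst X" "(u0, u1) \<in> tilde E" "is_env E'" "E' \<subseteq> tilde E"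
    using m unfolding YB_def by blast
  have envE: "is_env E" using f E(1) unfolding fwd_def envrel_wf_def by blast
  have tl: "tilde_aux E u0 u1" and cu: "closed u0" "closed u1" using E(2) unfolding tilde_def by auto
  have cr0: "closed r0" using step_closed st cu by blast
  from st obtain F0 x y where S: "ectx F0" "contr x y" "u0 = plug F0 x" "r0 = plug F0 y"
    unfolding step_iff by blast
  obtain F1 x1 where C: "u1 = plug F1 x1" "hat E F0 F1" "tilde_aux E x x1"
    using corr[of E F0 x u1] tl S cu envE by auto
  have hp: "ectx F1" "closed_ctx F0" "closed_ctx F1" using hat_props[OF C(2)] by auto
  have cx: "closed x" "closed x1" using cu S C hp by (auto simp: closed_def closed_plug)
  from S(2) show ?thesis
  proof cases
    case (1 v t)
    obtain a b where ab: "x1 = App a b" "tilde_aux E (Lam t) a" "tilde_aux E v b"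
      using tinv_app[OF _ envE] C(3) 1 by blast
    have bv: "is_val b" using tilde_aux_val[OF ab(3) envE] 1 by simp
    have F0: "\<exists>G. F0 = CReset G" using prog_shape[of F0 x] pp S(3) 1 by auto
    have cvb: "closed v" "closed b" "closed (Lam t)" "closed a" using cx 1 ab by (auto simp: closed_def)
    have nv: "\<not> is_val r0" using S(4) F0 by auto
    have pr: "is_prog (plug F1 y')" for y' using F0 hat_props[OF C(2)] by auto
    from tinv_lam[OF ab(2)] show ?thesis
    proof
      assume base: "(Lam t, a) \<in> E"
      then obtain t' where a: "a = Lam t'" using envE unfolding is_env_def by (cases a) auto
      have "(v, b) \<in> tilde E" using ab(3) cvb unfolding tilde_def by auto
      with f E(1) base a 1 bv have "(E, subst 0 v t, subst 0 b t') \<in> snd X"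
        unfolding fwd_def C3_def by blast
      from mkA[OF f this C(2) E(3,4)] have "(E', r0, plug F1 (subst 0 b t')) \<in> snd (Y X)"
        using S(4) 1 by simp
      moreover have "step u1 (plug F1 (subst 0 b t'))"
        using step.beta[OF hp(1) bv, of t'] C(1) ab a by simp
      ultimately show ?thesis using pr nv unfolding steps_def by blast
    next
      assume "\<exists>a'. a = Lam a' \<and> tilde_aux E t a'"
      then obtain t' where a: "a = Lam t'" "tilde_aux E t t'" by blast
      have s1: "step u1 (plug F1 (subst 0 b t'))"
        using step.beta[OF hp(1) bv, of t'] C(1) ab a by simp
      have "tilde_aux E r0 (plug F1 (subst 0 b t'))"
        using S(4) 1 hat_plug[OF C(2) tilde_aux_subst[OF a(2) envE ab(3)]] by simp
      from finB[OF E(1,3,4) envE s1 cu(2) cr0 this] pr nv show ?thesis by blast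
    qed
  next
    case (2 Ep t)
    obtain z where z: "x1 = Reset z" "tilde_aux E (plug Ep (Shift t)) z"
      using tinv_reset[OF _ envE] C(3) 2 by blast
    have cz: "closed (plug Ep (Shift t))" "closed z" using cx 2 z by (auto simp: closed_def)
    obtain Ep1 z1 where Z: "z = plug Ep1 z1" "hat E Ep Ep1" "tilde_aux E (Shift t) z1"
      using corr[OF z(2) envE pctx_ectx[OF 2(3)] cz] by blast
    obtain t' where t': "z1 = Shift t'" "tilde_aux E t t'" using tinv_shift[OF Z(3) envE] by blast
    have pE1: "pctx Ep1" using hat_props[OF Z(2)] 2 by auto
    have s1: "step u1 (plug F1 (Reset (subst 0 (Lam (Reset (plug (liftc 0 Ep1) (Var 0)))) t')))"
      using step.shift[OF hp(1) pE1, of t'] C(1) z Z t' by simp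
    have K: "tilde_aux E (Lam (Reset (plug (liftc 0 Ep) (Var 0)))) (Lam (Reset (plug (liftc 0 Ep1) (Var 0))))"
      by (intro tilde_aux.lam tilde_aux.rst hat_plug_liftc[OF Z(2) envE] tilde_aux.var)
    have "tilde_aux E r0 (plug F1 (Reset (subst 0 (Lam (Reset (plug (liftc 0 Ep1) (Var 0)))) t')))"
      using S(4) 2 hat_plug[OF C(2) tilde_aux.rst[OF tilde_aux_subst[OF t'(2) envE K]]] by simp
    from finB[OF E(1,3,4) envE s1 cu(2) cr0 this] show ?thesis
      using hat_prog[OF C(2)] S(4) 2 plug_reset_not_val by auto
  next
    case 3
    obtain b where b: "x1 = Reset b" "tilde_aux E y b" using tinv_reset[OF _ envE] C(3) 3 by blast
    have bv: "is_val b" using tilde_aux_val[OF b(2) envE] 3 by simp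
    have s1: "step u1 (plug F1 b)" using step.reset[OF hp(1) bv] C(1) b by simp
    have "tilde_aux E r0 (plug F1 b)" using S(4) 3 hat_plug[OF C(2) b(2)] by simp
    moreover have "is_prog r0 \<longrightarrow> is_prog (plug F1 b)"
      using hat_prog[OF C(2), of y b] S(4) 3 by (cases y) auto
    moreover have "is_val r0 \<longrightarrow> is_val (plug F1 b)"
      using hat_val[OF C(2), of y] S(4) bv by auto
    ultimately show ?thesis using finB[OF E(1,3,4) envE s1 cu(2) cr0] by blast
  qed
qed




lemma C2_Y: "fwd X \<Longrightarrow> C2 (Y X)"
  unfolding C2_def
proof (intro allI impI conjI)
  fix E p0 p1 p0'
  assume f: "fwd X" and h: "(E, p0, p1) \<in> snd (Y X) \<and> is_prog p0 \<and> is_prog p1"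
    and s: "step p0 p0' \<and> is_prog p0'"
  from h have "(E, p0, p1) \<in> YA X \<or> (E, p0, p1) \<in> YB X" unfolding Y_def by auto
  then show "\<exists>p1'. steps p1 p1' \<and> is_prog p1' \<and> (E, p0', p1') \<in> snd (Y X)"
    using core_A[OF f _ _ _, of E p0 p1 p0'] core_B[OF f _ _, of E p0 p1 p0'] h s by blast
next
  fix E p0 p1 v0
  assume f: "fwd X" and h: "(E, p0, p1) \<in> snd (Y X) \<and> is_prog p0 \<and> is_prog p1"
    and s: "step p0 v0 \<and> is_val v0"
  from h have "(E, p0, p1) \<in> YA X \<or> (E, p0, p1) \<in> YB X" unfolding Y_def by auto
  then show "\<exists>v1. steps p1 v1 \<and> is_val v1 \<and> {(v0, v1)} \<union> E \<in> fst (Y X)"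
    using core_A[OF f _ _ _, of E p0 p1 v0] core_B[OF f _ _, of E p0 p1 v0] h s by blast
qed

lemma fwd_Y: "fwd X \<Longrightarrow> fwd (Y X)"
  using wf_Y C1_Y C2_Y C3_Y unfolding fwd_def by blast

lemma sub_tilde_conv: "E' \<subseteq> tilde (convE E) \<longleftrightarrow> convE E' \<subseteq> tilde E"
  by (metis convE_sub tilde_conv convE_convE)

lemma YE_conv: "E \<in> fst (Y (convX X)) \<longleftrightarrow> convE E \<in> fst (Y X)"
proof
  assume "E \<in> fst (Y (convX X))"
  then obtain E0 where "is_env E" "convE E0 \<in> fst X" "E \<subseteq> tilde E0" unfolding Y_def YE_def by auto
  then show "convE E \<in> fst (Y X)"
    using YE_I[of "convE E0" X "convE E"] sub_tilde_conv[of E "convE E0"] by simp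
next
  assume "convE E \<in> fst (Y X)"
  then obtain E0 where "is_env E" "E0 \<in> fst X" "convE E \<subseteq> tilde E0" unfolding Y_def YE_def by auto
  then show "E \<in> fst (Y (convX X))"
    using YE_I[of "convE E0" "convX X" E] sub_tilde_conv[of E "E0"] by simp
qed

lemma YA_conv1: "(E', a, b) \<in> YA (convX X) \<Longrightarrow> (convE E', b, a) \<in> YA X"
proof -
  assume "(E', a, b) \<in> YA (convX X)"
  then obtain E G0 G1 s0 s1 where A: "a = plug G0 s0" "b = plug G1 s1" "(E, s0, s1) \<in> snd (convX X)"
      "hat E G0 G1" "is_prog s0 \<and> is_prog s1 \<or> pctx G0 \<and> pctx G1" "is_env E'" "E' \<subseteq> tilde E"
    unfolding YA_def by blast
  have "(convE E, s1, s0) \<in> snd X" "hat (convE E) G1 G0" "convE E' \<subseteq> tilde (convE E)" "is_env (convE E')"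
    using A(3,4,6,7) sub_tilde_conv[of "convE E'" E] by auto
  with A show ?thesis unfolding YA_def
    by (intro CollectI exI[of _ "convE E'"] exI[of _ "convE E"] exI[of _ G1] exI[of _ G0] exI[of _ s1] exI[of _ s0]) auto
qed

lemma YA_conv2: "(convE E', b, a) \<in> YA X \<Longrightarrow> (E', a, b) \<in> YA (convX X)"
proof -
  assume "(convE E', b, a) \<in> YA X"
  then obtain E G0 G1 s0 s1 where A: "b = plug G0 s0" "a = plug G1 s1" "(E, s0, s1) \<in> snd X"
      "hat E G0 G1" "is_prog s0 \<and> is_prog s1 \<or> pctx G0 \<and> pctx G1" "is_env E'" "convE E' \<subseteq> tilde E"
    unfolding YA_def by auto
  then have "(convE (convE E), s0, s1) \<in> snd X" "hat (convE E) G1 G0" "E' \<subseteq> tilde (convE E)"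
    using sub_tilde_conv[of E' E] by auto
  have "E' \<subseteq> tilde (convE E)" using A(7) sub_tilde_conv[of E' E] by blast
  with A show ?thesis unfolding YA_def
    by (intro CollectI exI[of _ E'] exI[of _ "convE E"] exI[of _ G1] exI[of _ G0] exI[of _ s1] exI[of _ s0]) auto
qed

lemma YB_conv1: "(E', a, b) \<in> YB (convX X) \<Longrightarrow> (convE E', b, a) \<in> YB X"
proof -
  assume "(E', a, b) \<in> YB (convX X)"
  then obtain E where "convE E \<in> fst X" "(a, b) \<in> tilde E" "is_env E'" "E' \<subseteq> tilde E"
    unfolding YB_def by auto
  then have "convE E \<in> fst X" "(b, a) \<in> tilde (convE E)" "is_env (convE E')" "convE E' \<subseteq> tilde (convE E)"
    using sub_tilde_conv[of "E'" E] by auto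
  then show ?thesis unfolding YB_def by blast
qed

lemma YB_conv2: "(convE E', b, a) \<in> YB X \<Longrightarrow> (E', a, b) \<in> YB (convX X)"
proof -
  assume "(convE E', b, a) \<in> YB X"
  then obtain E where B: "E \<in> fst X" "(b, a) \<in> tilde E" "is_env (convE E')" "convE E' \<subseteq> tilde E"
    unfolding YB_def by blast
  have "convE E \<in> fst (convX X)" "(a, b) \<in> tilde (convE E)" "is_env E'" "E' \<subseteq> tilde (convE E)"
    using B sub_tilde_conv[of E' E] by auto
  then show ?thesis unfolding YB_def by blast
qed

lemma Y_conv: "Y (convX X) = convX (Y X)"
proof -
  have "fst (Y (convX X)) = fst (convX (Y X))" using YE_conv[of _ X] by auto
  moreover have "snd (Y (convX X)) = snd (convX (Y X))"
  proof (rule set_eqI)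
    fix p show "p \<in> snd (Y (convX X)) \<longleftrightarrow> p \<in> snd (convX (Y X))"
    proof (cases p)
      case (fields E a b)
      then show ?thesis
        using YA_conv1[of E a b X] YA_conv2[of E b a X] YB_conv1[of E a b X] YB_conv2[of E b a X]
        unfolding Y_def by auto
    qed
  qed
  ultimately show ?thesis by (simp add: prod_eq_iff)
qed

lemma fwd_conv: "prog_bisim X \<Longrightarrow> fwd (convX X)"
  unfolding prog_bisim_iff fwd_def using wf_conv C1_conv C2_conv C3_conv by blast

theorem lemma14:
  fixes E :: env and t0 t1 :: tm and F :: ctx
  assumes "is_env E"
    and "closed t0" and "closed t1"
    and "bisimp E t0 t1"
    and "ectx F" and "closed_ctx F"
  shows "bisimp E (plug F t0) (plug F t1)"
proof -
  from assms(4) obtain X where X: "prog_bisim X" "(E, t0, t1) \<in> snd X" unfolding bisimp_def by blast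
  have f: "fwd X" using X(1) unfolding prog_bisim_iff fwd_def by blast
  have f2: "fwd (Y (convX X))" using fwd_Y[OF fwd_conv[OF X(1)]] .
  then have "fwd (convX (Y X))" by (simp add: Y_conv)
  then have "C2' (Y X)" using C2'_conv unfolding fwd_def by blast
  with fwd_Y[OF f] have "prog_bisim (Y X)" unfolding prog_bisim_iff fwd_def by blast
  moreover have "(E, plug F t0, plug F t1) \<in> snd (Y X)"
    using mkA[OF f X(2) hat_refl[OF assms(5,6)] assms(1) env_sub_tilde[OF assms(1)]] .
  ultimately show ?thesis unfolding bisimp_def by blast
qed


end
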